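(* Let $\eta>0$, $\beta\in[0,1)$ and $\lambda_i$ with $\eta\lambda_i>0$. Define ${\mathcal{M}}_i:\mathbb{S}^2\to\mathbb{S}^2$ by ${\mathcal{M}}_i({\bm{X}}):={\bm{A}}_i{\bm{X}}{\bm{A}}_i^\top+\eta^2\lambda_i^2({\bm{X}})_{11}{\bm{Q}}$, where ${\bm{A}}_i=\begin{bmatrix}1-\eta\lambda_i&-\beta\\ \eta\lambda_i&\beta\end{bmatrix}$ and ${\bm{Q}}=\begin{bmatrix}1&-1\\-1&1\end{bmatrix}$. Then: (a) $\rho({\mathcal{M}}_i)<1$ if and only if $\eta\lambda_i<1-\beta^2$; (b) if $\eta\lambda_i<1-\beta^2$, then $\mathrm{Id}-{\mathcal{M}}_i$ is invertible and $(\mathrm{Id}-{\mathcal{M}}_i)^{-1}(\mathbb{S}^2_+)\subseteq\mathbb{S}^2_+$; (c) if $\eta\lambda_i<1-\beta^2$, then ${\bm{Y}}_i:=(\mathrm{Id}-{\mathcal{M}}_i)^{-1}{\bm{Q}}\in\mathbb{S}^2_+$ and $\gamma_i:=({\bm{Y}}_i)_{11}=\dfrac{1+\beta}{2\eta\lambda_i(1-\beta^2-\eta\lambda_i)}$.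
   Context: $\mathbb{S}^2$ denotes the space of real symmetric $2\times2$ matrices and $\mathbb{S}^2_+$ the cone of positive semidefinite ones; $\rho(\cdot)$ denotes spectral radius and $\mathrm{Id}$ the identity map. *)

theory Defs
  imports "HOL-Analysis.Analysis"
begin

definition mat2 :: "'a::comm_ring_1 \<Rightarrow> 'a \<Rightarrow> 'a \<Rightarrow> 'a \<Rightarrow> 'a^2^2" where
  "mat2 a b c d = (\<chi> i j. if i = 1 then (if j = 1 then a else b) else (if j = 1 then c else d))"

definition smat :: "'a::comm_ring_1 \<Rightarrow> 'a^2^2 \<Rightarrow> 'a^2^2" where
  "smat c M = (\<chi> i j. c * M$i$j)"

definition S2 :: "(real^2^2) set" where
  "S2 = {X. transpose X = X}"

definition psd2 :: "real^2^2 \<Rightarrow> bool" where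
  "psd2 X \<longleftrightarrow> transpose X = X \<and> (\<forall>v::real^2. 0 \<le> v \<bullet> (X *v v))"

definition S2_plus :: "(real^2^2) set" where
  "S2_plus = {X. psd2 X}"

text \<open>A_i, Q and the operator M_i(X) = A X A^T + eta^2 lambda^2 X_11 Q, stated generically
  so that the same formula gives the operator on real matrices and its complexification.\<close>
definition Amat :: "'a::comm_ring_1 \<Rightarrow> 'a \<Rightarrow> 'a \<Rightarrow> 'a^2^2" where
  "Amat \<eta> lam \<beta> = mat2 (1 - \<eta>*lam) (-\<beta>) (\<eta>*lam) \<beta>"

definition Qmat :: "'a::comm_ring_1^2^2" where
  "Qmat = mat2 1 (-1) (-1) 1"

definition Mop :: "'a::comm_ring_1 \<Rightarrow> 'a \<Rightarrow> 'a \<Rightarrow> 'a^2^2 \<Rightarrow> 'a^2^2" where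
  "Mop \<eta> lam \<beta> X = Amat \<eta> lam \<beta> ** X ** transpose (Amat \<eta> lam \<beta>)
      + smat (\<eta>^2 * lam^2 * X$1$1) Qmat"

text \<open>Spectral radius of M_i as a linear operator on S^2: the largest modulus of an
  eigenvalue of its complexification, acting on complex symmetric 2x2 matrices
  (the complexification of S^2).\<close>
definition Mop_eigenvalue :: "real \<Rightarrow> real \<Rightarrow> real \<Rightarrow> complex \<Rightarrow> bool" where
  "Mop_eigenvalue \<eta> lam \<beta> z \<longleftrightarrow>
     (\<exists>Z::complex^2^2. transpose Z = Z \<and> Z \<noteq> 0 \<and>
        Mop (complex_of_real \<eta>) (complex_of_real lam) (complex_of_real \<beta>) Z = smat z Z)"

definition Mop_specrad :: "real \<Rightarrow> real \<Rightarrow> real \<Rightarrow> real" where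
  "Mop_specrad \<eta> lam \<beta> = Sup (cmod ` {z. Mop_eigenvalue \<eta> lam \<beta> z})"

end

theory Submission
  imports Defs "HOL-Computational_Algebra.Polynomial"
begin



lemma Mop_entries:
  fixes e l b :: "'a::comm_ring_1"
  shows
  "Mop e l b X $1$1 = (1-e*l)*(1-e*l)*X$1$1 - (1-e*l)*b*X$1$2 - b*(1-e*l)*X$2$1 + b*b*X$2$2 + e^2*l^2*X$1$1"
  "Mop e l b X $1$2 = (1-e*l)*(e*l)*X$1$1 + (1-e*l)*b*X$1$2 - b*(e*l)*X$2$1 - b*b*X$2$2 - e^2*l^2*X$1$1"
  "Mop e l b X $2$1 = (e*l)*(1-e*l)*X$1$1 - (e*l)*b*X$1$2 + b*(1-e*l)*X$2$1 - b*b*X$2$2 - e^2*l^2*X$1$1"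
  "Mop e l b X $2$2 = (e*l)*(e*l)*X$1$1 + (e*l)*b*X$1$2 + b*(e*l)*X$2$1 + b*b*X$2$2 + e^2*l^2*X$1$1"
  by (simp_all add: Mop_def Amat_def Qmat_def mat2_def smat_def matrix_matrix_mult_def
      transpose_def sum_2 algebra_simps)




lemma normsq_id:
  fixes u w :: complex and p q :: real
  shows "(cmod (of_real p*w - of_real q*u))^2 - (cmod (of_real p*u - of_real q*w))^2 = (p^2-q^2)*((cmod w)^2 - (cmod u)^2)"
  unfolding cmod_power2 by (simp add: power2_eq_square) algebra

lemma normsq_lin:
  fixes z :: complex and k m :: real
  shows "(cmod (of_real k + of_real m*z))^2 - (cmod (of_real k*z + of_real m))^2 = (k^2 - m^2)*(1 - (cmod z)^2)"
  unfolding cmod_power2 by (simp add: power2_eq_square) algebra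

lemma schur3:
  fixes c0 c1 c2 :: real and z :: complex
  assumes ga: "\<bar>c1 - c0*c2\<bar> < 1 - c0^2"
    and be: "\<bar>c2 - c0*c1\<bar> < (1 - c0^2) + (c1 - c0*c2)"
    and root: "z^3 + c2 * z^2 + c1 * z + c0 = 0"
  shows "cmod z < 1"
proof (rule ccontr)
  assume "\<not> cmod z < 1"
  hence s1: "cmod z ^2 \<ge> 1" by (simp add: one_le_power)
  define al where "al = 1 - c0^2"
  define bb where "bb = c2 - c0*c1"
  define gg where "gg = c1 - c0*c2"
  define P where "P = z^3 + c2 * z^2 + c1 * z + c0"
  define Ps where "Ps = c0 * z^3 + c1 * z^2 + c2 * z + 1"
  define Q where "Q = al * z^2 + bb*z + gg"
  define Qs where "Qs = gg * z^2 + bb*z + al"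
  define Lz where "Lz = (al+gg)*z + bb"
  define Ls where "Ls = (al+gg) + bb*z"
  have P0: "P = 0" using root by (simp add: P_def)
  have id1: "z*Q = P - c0*Ps" unfolding Q_def P_def Ps_def al_def bb_def gg_def
    by (simp add: algebra_simps power2_eq_square power3_eq_cube)
  have id2: "Qs = Ps - c0*P" unfolding Qs_def P_def Ps_def al_def bb_def gg_def
    by (simp add: algebra_simps power2_eq_square power3_eq_cube)
  have id3: "al*Qs - gg*Q = complex_of_real (al-gg)*Ls" unfolding Qs_def Q_def Ls_def
    by (simp add: algebra_simps power2_eq_square)
  have id4: "al*Q - gg*Qs = complex_of_real (al-gg)*(z*Lz)" unfolding Qs_def Q_def Lz_def
    by (simp add: algebra_simps power2_eq_square)
  have alpos: "al > 0" "al - gg > 0" "al + gg > 0" using ga by (auto simp: al_def gg_def)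
  have bb1: "\<bar>bb\<bar> < al + gg" using be by (simp add: al_def bb_def gg_def)
  have Kpos: "(al+gg)^2 - bb^2 > 0"
  proof -
    have "(al+gg)^2 - bb^2 = (al+gg-bb)*(al+gg+bb)" by (simp add: algebra_simps power2_eq_square)
    moreover have "al+gg-bb > 0" "al+gg+bb > 0" using bb1 by auto
    ultimately show ?thesis by simp
  qed
  have A: "cmod Qs ^2 - cmod z^2 * cmod Q ^2 \<ge> 0"
  proof -
    have "cmod (z*Q)^2 = c0^2 * cmod Ps^2" using id1 P0 by (simp add: norm_mult power_mult_distrib)
    moreover have "cmod Qs = cmod Ps" using id2 P0 by simp
    ultimately have "cmod Qs ^2 - cmod z^2 * cmod Q ^2 = al * cmod Ps^2"
      by (simp add: norm_mult power_mult_distrib al_def algebra_simps)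
    thus ?thesis using alpos by simp
  qed
  have A2: "cmod Qs ^2 \<ge> cmod Q ^2"
  proof -
    have "cmod z^2 * cmod Q ^2 \<ge> 1 * cmod Q^2" using s1 by (intro mult_right_mono) auto
    thus ?thesis using A by linarith
  qed
  have B: "(al-gg)^2 * (cmod Ls^2 - cmod z^2 * cmod Lz^2) = (al^2-gg^2)*(cmod Qs^2 - cmod Q^2)"
  proof -
    have "cmod (al*Qs - gg*Q)^2 - cmod (al*Q - gg*Qs)^2 = (al^2-gg^2)*(cmod Qs^2 - cmod Q^2)"
      by (rule normsq_id)
    moreover have "cmod (al*Qs - gg*Q)^2 = (al-gg)^2 * cmod Ls^2"
      unfolding id3 by (simp only: norm_mult power_mult_distrib norm_of_real power2_abs)
    moreover have "cmod (al*Q - gg*Qs)^2 = (al-gg)^2 * (cmod z^2 * cmod Lz^2)"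
      unfolding id4 by (simp only: norm_mult power_mult_distrib norm_of_real power2_abs)
    ultimately show ?thesis by (simp add: algebra_simps)
  qed
  have B2: "cmod Ls^2 - cmod z^2 * cmod Lz^2 \<ge> 0"
  proof -
    have "al^2-gg^2 = (al-gg)*(al+gg)" by (simp add: power2_eq_square algebra_simps)
    hence "al^2-gg^2 \<ge> 0" using alpos by simp
    hence "(al^2-gg^2)*(cmod Qs^2 - cmod Q^2) \<ge> 0"
      using A2 by (intro mult_nonneg_nonneg) auto
    hence "(al-gg)^2 * (cmod Ls^2 - cmod z^2 * cmod Lz^2) \<ge> 0" using B by simp
    thus ?thesis using alpos by (simp add: zero_le_mult_iff)
  qed
  have C: "cmod Ls^2 - cmod Lz^2 = ((al+gg)^2 - bb^2)*(1 - cmod z^2)"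
    unfolding Ls_def Lz_def by (rule normsq_lin)
  have "cmod z^2 * cmod Lz^2 \<ge> 1 * cmod Lz^2" using s1 by (intro mult_right_mono) auto
  hence "((al+gg)^2 - bb^2)*(1 - cmod z^2) \<ge> 0" using B2 C by simp
  hence "1 - cmod z^2 \<ge> 0" using Kpos by (simp add: zero_le_mult_iff)
  hence s: "cmod z^2 = 1" using s1 by simp
  hence zz: "z * cnj z = 1" by (metis complex_norm_square of_real_1 of_real_power)
  have z0: "z \<noteq> 0" using zz by auto
  have "Ps = z^3 * cnj P"
  proof -
    have "z^3 * cnj P = (z*cnj z)^3 + c2 * z * (z*cnj z)^2 + c1 * z^2 * (z * cnj z) + c0 * z^3"
      unfolding P_def by (simp add: algebra_simps power2_eq_square power3_eq_cube)
    thus ?thesis unfolding zz Ps_def by (simp add: algebra_simps power2_eq_square power3_eq_cube)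
  qed
  hence Ps0: "Ps = 0" using P0 by simp
  have Q0: "Q = 0" using id1 P0 Ps0 z0 by simp
  have Qs0: "Qs = 0" using id2 P0 Ps0 by simp
  have Ls0: "Ls = 0" using id3 Q0 Qs0 alpos by simp
  have Lz0: "Lz = 0" using id4 Q0 Qs0 alpos z0 by simp
  have "(al+gg-bb)*(1-z) = Ls - Lz" unfolding Ls_def Lz_def by (simp add: algebra_simps)
  hence "(al+gg-bb)*(1-z) = 0" using Ls0 Lz0 by simp
  moreover have "al+gg-bb \<noteq> 0" using be al_def bb_def gg_def by auto
  ultimately have "z = 1" by (metis eq_iff_diff_eq_0 mult_eq_0_iff of_real_eq_0_iff)
  moreover have "complex_of_real (al+gg+bb)*(1+z) = Ls + Lz" unfolding Ls_def Lz_def by (simp add: algebra_simps)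
  hence "complex_of_real (al+gg+bb)*(1+z) = 0" using Ls0 Lz0 by simp
  moreover have "al+gg+bb \<noteq> 0" using be al_def bb_def gg_def by auto
  ultimately have "1 + z = 0" by (metis mult_eq_0_iff of_real_eq_0_iff)
  with \<open>z = 1\<close> show False by simp
qed




lemma Mop_sym:
  fixes e l b :: "'a::comm_ring_1"
  assumes "X$2$1 = X$1$2"
  shows "Mop e l b X $1$1 = ((1-e*l)^2 + (e*l)^2) * X$1$1 - 2*(1-e*l)*b * X$1$2 + b^2 * X$2$2"
    "Mop e l b X $1$2 = (e*l)*(1-2*(e*l)) * X$1$1 + b*(1-2*(e*l)) * X$1$2 - b^2 * X$2$2"
    "Mop e l b X $2$1 = (e*l)*(1-2*(e*l)) * X$1$1 + b*(1-2*(e*l)) * X$1$2 - b^2 * X$2$2"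
    "Mop e l b X $2$2 = 2*(e*l)^2 * X$1$1 + 2*(e*l)*b * X$1$2 + b^2 * X$2$2"
  unfolding Mop_entries assms by (simp_all add: algebra_simps power2_eq_square)

definition pc :: "complex \<Rightarrow> complex \<Rightarrow> complex \<Rightarrow> complex" where
  "pc a b z = z^3 - (1 + b + b^2 - 2*a - 2*a*b + 2*a^2) * z^2
     + (b + b^2 + b^3 - 2*a*b - 2*a*b^2) * z - b^3"

definition Kmat :: "complex \<Rightarrow> complex \<Rightarrow> complex \<Rightarrow> complex^3^3" where
  "Kmat a b z = vector [
     vector [((1-a)^2 + a^2) - z, -2*(1-a)*b, b^2],
     vector [a*(1-2*a), b*(1-2*a) - z, -(b^2)],
     vector [2*a^2, 2*a*b, b^2 - z]]"

lemma det_Kmat: "det (Kmat a b z) = - pc a b z"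
  unfolding Kmat_def pc_def det_3 apply (simp add: vector_3)
  apply (simp add: power2_eq_square power3_eq_cube)
  by algebra

lemma Kmat_mult: "(Kmat a b z *v v) = vector [
   (((1-a)^2 + a^2) - z) * v$1 + (-2*(1-a)*b) * v$2 + (b^2) * v$3,
   (a*(1-2*a)) * v$1 + (b*(1-2*a) - z) * v$2 + (-(b^2)) * v$3,
   (2*a^2) * v$1 + (2*a*b) * v$2 + (b^2 - z) * v$3]"
  unfolding Kmat_def by (simp add: vec_eq_iff forall_3 matrix_vector_mult_def sum_3 vector_3)

lemma det0_iff: "det (K::complex^3^3) = 0 \<longleftrightarrow> (\<exists>v. v \<noteq> 0 \<and> K *v v = 0)"
proof -
  have "det K \<noteq> 0 \<longleftrightarrow> invertible K" by (rule invertible_det_nz[symmetric])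
  also have "\<dots> \<longleftrightarrow> (\<exists>B. B ** K = mat 1)" by (rule invertible_left_inverse)
  also have "\<dots> \<longleftrightarrow> (\<forall>x. K *v x = 0 \<longrightarrow> x = 0)" by (rule matrix_left_invertible_ker)
  finally show ?thesis by blast
qed

lemma eig_iff_ker:
  fixes eta lam beta :: real
  defines "a \<equiv> complex_of_real eta * complex_of_real lam" and "b \<equiv> complex_of_real beta"
  shows "Mop_eigenvalue eta lam beta z \<longleftrightarrow> (\<exists>v. v \<noteq> 0 \<and> Kmat a b z *v v = 0)"
proof
  assume "Mop_eigenvalue eta lam beta z"
  then obtain Z :: "complex^2^2" where Zs: "transpose Z = Z" and Z0: "Z \<noteq> 0"
    and E: "Mop (complex_of_real eta) (complex_of_real lam) (complex_of_real beta) Z = smat z Z"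
    unfolding Mop_eigenvalue_def by blast
  have s12: "Z$2$1 = Z$1$2"
  proof -
    have "transpose Z $1$2 = Z$1$2" using Zs by simp
    thus ?thesis by (simp add: transpose_def)
  qed
  define v :: "complex^3" where "v = vector [Z$1$1, Z$1$2, Z$2$2]"
  have "v \<noteq> 0"
  proof
    assume "v = 0"
    hence "Z$1$1 = 0" "Z$1$2 = 0" "Z$2$2 = 0" unfolding v_def by (auto simp: vec_eq_iff forall_3 vector_3)
    hence "Z = 0" using s12 by (simp add: vec_eq_iff forall_2)
    thus False using Z0 by simp
  qed
  moreover
  note ms = Mop_sym[OF s12, of "complex_of_real eta" "complex_of_real lam" "complex_of_real beta", folded a_def b_def]
  have E': "Mop (complex_of_real eta) (complex_of_real lam) (complex_of_real beta) Z $i$j = z * Z$i$j" for i j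
    using E by (simp add: smat_def)
  have e11: "((1-a)^2 + a^2) * Z$1$1 - 2*(1-a)*b * Z$1$2 + b^2 * Z$2$2 = z * Z$1$1"
    using E'[of 1 1] unfolding Mop_sym(1)[OF s12] a_def b_def .
  have e12: "a*(1-2*a) * Z$1$1 + b*(1-2*a) * Z$1$2 - b^2 * Z$2$2 = z * Z$1$2"
    using E'[of 1 2] unfolding Mop_sym(2)[OF s12] a_def b_def .
  have e22: "2*a^2 * Z$1$1 + 2*a*b * Z$1$2 + b^2 * Z$2$2 = z * Z$2$2"
    using E'[of 2 2] unfolding Mop_sym(4)[OF s12] a_def b_def .
  have "Kmat a b z *v v = 0"
    unfolding Kmat_mult v_def vec_eq_iff forall_3 vector_3
    using e11 e12 e22 by (simp add: algebra_simps)
  ultimately show "\<exists>v. v \<noteq> 0 \<and> Kmat a b z *v v = 0" by blast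
next
  assume "\<exists>v. v \<noteq> 0 \<and> Kmat a b z *v v = 0"
  then obtain v where v0: "v \<noteq> 0" and K: "Kmat a b z *v v = 0" by blast
  define Z :: "complex^2^2" where "Z = mat2 (v$1) (v$2) (v$2) (v$3)"
  have Ze: "Z$1$1 = v$1" "Z$1$2 = v$2" "Z$2$1 = v$2" "Z$2$2 = v$3"
    unfolding Z_def mat2_def by simp_all
  have "transpose Z = Z" by (simp add: vec_eq_iff forall_2 transpose_def Ze)
  moreover have "Z \<noteq> 0"
  proof
    assume "Z = 0"
    hence "v$1 = 0" "v$2 = 0" "v$3 = 0" using Ze by auto
    hence "v = 0" by (simp add: vec_eq_iff forall_3)
    thus False using v0 by simp
  qed
  moreover have "Mop (complex_of_real eta) (complex_of_real lam) (complex_of_real beta) Z = smat z Z"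
  proof -
    have k: "(((1-a)^2 + a^2) - z) * v$1 + (-2*(1-a)*b) * v$2 + (b^2) * v$3 = 0"
     "(a*(1-2*a)) * v$1 + (b*(1-2*a) - z) * v$2 + (-(b^2)) * v$3 = 0"
     "(2*a^2) * v$1 + (2*a*b) * v$2 + (b^2 - z) * v$3 = 0"
      using K unfolding Kmat_mult vec_eq_iff forall_3 vector_3 by simp_all
    have s: "Z$2$1 = Z$1$2" using Ze by simp
    show ?thesis
      unfolding vec_eq_iff forall_2 smat_def Mop_sym[OF s] using k unfolding a_def b_def
      by (simp add: Ze algebra_simps)
  qed
  ultimately show "Mop_eigenvalue eta lam beta z" unfolding Mop_eigenvalue_def by blast
qed

lemma eig_iff_root:
  "Mop_eigenvalue eta lam beta z \<longleftrightarrow> pc (complex_of_real eta * complex_of_real lam) (complex_of_real beta) z = 0"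
  using eig_iff_ker[of eta lam beta z] det0_iff[of "Kmat _ _ z"] det_Kmat by (metis neg_equal_0_iff_equal)




lemma S2_iff: "X \<in> S2 \<longleftrightarrow> X$2$1 = X$1$2"
proof
  assume "X \<in> S2"
  hence "transpose X $1$2 = X$1$2" by (simp add: S2_def)
  thus "X$2$1 = X$1$2" by (simp add: transpose_def)
next
  assume "X$2$1 = X$1$2"
  thus "X \<in> S2" unfolding S2_def by (auto simp: transpose_def vec_eq_iff forall_2)
qed

lemma quad2:
  fixes X :: "real^2^2"
  assumes "X$2$1 = X$1$2"
  shows "v \<bullet> (X *v v) = X$1$1 * (v$1)^2 + 2 * X$1$2 * v$1 * v$2 + X$2$2 * (v$2)^2"
  using assms by (simp add: inner_vec_def sum_2 matrix_vector_mult_def algebra_simps power2_eq_square)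

definition pE :: "real \<Rightarrow> real \<Rightarrow> real \<Rightarrow> bool" where
  "pE x y w \<longleftrightarrow> 0 \<le> x \<and> 0 \<le> w \<and> y^2 \<le> x * w"

lemma pE_quad:
  assumes "pE x y w"
  shows "0 \<le> x * p^2 + 2 * y * p * q + w * q^2"
proof (cases "x = 0")
  case True
  with assms have "y = 0" by (simp add: pE_def)
  with True assms show ?thesis by (simp add: pE_def)
next
  case False
  with assms have xp: "x > 0" by (simp add: pE_def)
  have "x * (x * p^2 + 2 * y * p * q + w * q^2) = (x*p + y*q)^2 + (x*w - y^2) * q^2"
    by (simp add: algebra_simps power2_eq_square)
  also have "\<dots> \<ge> 0" using assms by (simp add: pE_def)
  finally show ?thesis using xp by (simp add: zero_le_mult_iff)
qed

lemma pE_iff_quad: "pE x y w \<longleftrightarrow> (\<forall>p q. 0 \<le> x * p^2 + 2 * y * p * q + w * q^2)"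
proof
  assume "pE x y w" thus "\<forall>p q. 0 \<le> x * p^2 + 2 * y * p * q + w * q^2" using pE_quad by blast
next
  assume "\<forall>p q. 0 \<le> x * p^2 + 2 * y * p * q + w * q^2"
  hence Q: "0 \<le> x * p^2 + 2 * y * p * q + w * q^2" for p q by blast
  have x0: "0 \<le> x" using Q[of 1 0] by simp
  have w0: "0 \<le> w" using Q[of 0 1] by simp
  have d: "y^2 \<le> x * w"
  proof (cases "x = 0")
    case True
    have "y = 0"
    proof (rule ccontr)
      assume y: "y \<noteq> 0"
      have "0 \<le> x * (-(w+1)/(2*y))^2 + 2 * y * (-(w+1)/(2*y)) * 1 + w * 1^2"
        by (rule Q)
      also have "\<dots> = -1" using True y by (simp add: field_simps)
      finally show False by simp
    qed
    thus ?thesis using True by simp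
  next
    case False
    hence xp: "x > 0" using x0 by simp
    have "0 \<le> x * (-y)^2 + 2 * y * (-y) * x + w * x^2" by (rule Q)
    also have "\<dots> = x * (x * w - y^2)" by (simp add: algebra_simps power2_eq_square)
    finally show ?thesis using xp by (simp add: zero_le_mult_iff)
  qed
  show "pE x y w" using x0 w0 d by (simp add: pE_def)
qed

lemma psd2_iff: "psd2 X \<longleftrightarrow> X$2$1 = X$1$2 \<and> pE (X$1$1) (X$1$2) (X$2$2)"
proof
  assume A: "psd2 X"
  hence s: "X$2$1 = X$1$2" using S2_iff unfolding psd2_def S2_def by blast
  have Q: "0 \<le> X$1$1 * p^2 + 2 * X$1$2 * p * q + X$2$2 * q^2" for p q
  proof -
    have "0 \<le> (vector [p,q] :: real^2) \<bullet> (X *v vector [p,q])" using A by (simp add: psd2_def)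
    thus ?thesis unfolding quad2[OF s] by simp
  qed
  show "X$2$1 = X$1$2 \<and> pE (X$1$1) (X$1$2) (X$2$2)" using s Q pE_iff_quad by blast
next
  assume A: "X$2$1 = X$1$2 \<and> pE (X$1$1) (X$1$2) (X$2$2)"
  hence "X \<in> S2" using S2_iff by blast
  moreover have "0 \<le> v \<bullet> (X *v v)" for v
    unfolding quad2[OF conjunct1[OF A]] using pE_quad[OF conjunct2[OF A]] by simp
  ultimately show "psd2 X" by (simp add: psd2_def S2_def)
qed

lemma pE_add: "pE x y w \<Longrightarrow> pE x' y' w' \<Longrightarrow> pE (x+x') (y+y') (w+w')"
  unfolding pE_iff_quad
proof (intro allI)
  fix p q
  assume "\<forall>p q. 0 \<le> x * p^2 + 2 * y * p * q + w * q^2" "\<forall>p q. 0 \<le> x' * p^2 + 2 * y' * p * q + w' * q^2"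
  hence "0 \<le> x * p^2 + 2 * y * p * q + w * q^2" "0 \<le> x' * p^2 + 2 * y' * p * q + w' * q^2" by blast+
  thus "0 \<le> (x+x') * p^2 + 2 * (y+y') * p * q + (w+w') * q^2" by (simp add: algebra_simps)
qed

lemma pE_scale: "pE x y w \<Longrightarrow> 0 \<le> c \<Longrightarrow> pE (c*x) (c*y) (c*w)"
  unfolding pE_def by (auto simp: power_mult_distrib power2_eq_square algebra_simps intro: mult_left_mono)

lemma pE_cong: "pE x y w \<Longrightarrow>
  pE (g1^2*x + 2*g1*g2*y + g2^2*w) (g1*g3*x + (g1*g4+g2*g3)*y + g2*g4*w) (g3^2*x + 2*g3*g4*y + g4^2*w)"
  unfolding pE_iff_quad
proof (intro allI)
  fix p q
  assume "\<forall>p q. 0 \<le> x * p^2 + 2 * y * p * q + w * q^2"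
  hence "0 \<le> x * (g1*p + g3*q)^2 + 2 * y * (g1*p + g3*q) * (g2*p + g4*q) + w * (g2*p+g4*q)^2" by blast
  thus "0 \<le> (g1^2*x + 2*g1*g2*y + g2^2*w) * p^2 + 2 * (g1*g3*x + (g1*g4+g2*g3)*y + g2*g4*w) * p * q + (g3^2*x + 2*g3*g4*y + g4^2*w) * q^2"
    by (simp add: algebra_simps power2_eq_square)
qed




definition e1f :: "real \<Rightarrow> real \<Rightarrow> real" where "e1f a b = 1 + b + b^2 - 2*a - 2*a*b + 2*a^2"
definition e2f :: "real \<Rightarrow> real \<Rightarrow> real" where "e2f a b = b + b^2 + b^3 - 2*a*b - 2*a*b^2"

lemma pc_real: "pc (complex_of_real eta * complex_of_real lam) (complex_of_real beta) z
   = z^3 + of_real (- e1f (eta*lam) beta) * z^2 + of_real (e2f (eta*lam) beta) * z + of_real (-(beta^3))"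
  unfolding pc_def e1f_def e2f_def by (simp add: algebra_simps)

lemma pc_realpt: "pc (complex_of_real eta * complex_of_real lam) (complex_of_real beta) (of_real t)
   = of_real (t^3 - e1f (eta*lam) beta * t^2 + e2f (eta*lam) beta * t - beta^3)"
  unfolding pc_real by simp

lemma pc_poly: "pc (complex_of_real eta * complex_of_real lam) (complex_of_real beta) z
   = poly [:of_real (-(beta^3)), of_real (e2f (eta*lam) beta), of_real (- e1f (eta*lam) beta), 1:] z"
  unfolding pc_real by (simp add: algebra_simps power2_eq_square power3_eq_cube)

lemma ineqs:
  fixes a b :: real
  assumes a0: "0 < a" and b0: "0 \<le> b" and b1: "b < 1" and ad: "a < 1 - b^2"
  shows "\<bar>e2f a b - (-(b^3))*(- e1f a b)\<bar> < 1 - (-(b^3))^2"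
    and "\<bar>(- e1f a b) - (-(b^3))*(e2f a b)\<bar> < (1 - (-(b^3))^2) + (e2f a b - (-(b^3))*(- e1f a b))"
proof -
  define al where "al = 1 - b^6"
  define ga where "ga = e2f a b - b^3 * e1f a b"
  define bb where "bb = - e1f a b + b^3 * e2f a b"
  have b3: "b^3 < 1" using b0 b1 by (simp add: power_less_one_iff)
  have b3': "0 \<le> b^3" using b0 by simp
  have D0: "0 < 1 - b^2" using b0 b1 by (simp add: power_less_one_iff)
  have i1: "al - ga > 0"
  proof -
    have "al - ga = (1-b^3)*(1-b)*(1-b^2) + 2*a*b*(1+b)*(1-b^2) + 2*a^2*b^3"
      unfolding al_def ga_def e1f_def e2f_def by algebra
    moreover have "(1-b^3)*(1-b)*(1-b^2) > 0" using b3 b1 D0 by simp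
    moreover have "2*a*b*(1+b)*(1-b^2) \<ge> 0" using a0 b0 D0 by simp
    moreover have "2*a^2*b^3 \<ge> 0" using b3' by simp
    ultimately show ?thesis by linarith
  qed
  have i2: "al + ga > 0"
  proof -
    have "al + ga = (1-b^3)*(1+b)*(1+b^2) - 2*a*(b*(1+b)*(1-b^2)) - 2*a^2*b^3"
      unfolding al_def ga_def e1f_def e2f_def by algebra
    moreover have "a*(b*(1+b)*(1-b^2)) \<le> (1-b^2)*(b*(1+b)*(1-b^2))"
      using ad b0 D0 by (intro mult_right_mono) auto
    moreover have "a^2*b^3 \<le> (1-b^2)^2*b^3"
      using ad a0 b3' by (intro mult_right_mono power_mono) auto
    moreover have "(1-b^3)*(1+b)*(1+b^2) - 2*(1-b^2)*(b*(1+b)*(1-b^2)) - 2*(1-b^2)^2*b^3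
        = (1-b^2)*(1+b+b^2)*((1-b)^2 + 2*b^3)" by algebra
    moreover have "(1-b^2)*(1+b+b^2)*((1-b)^2 + 2*b^3) > 0"
    proof -
      have "(1-b)^2 > 0" using b1 by simp
      hence "(1-b)^2 + 2*b^3 > 0" using b3' by linarith
      moreover have "1+b+b^2 > 0" using b0 by (simp add: add_pos_nonneg)
      ultimately show ?thesis using D0 by simp
    qed
    ultimately show ?thesis by linarith
  qed
  have i3: "al + ga + bb > 0"
  proof -
    have "al + ga + bb = 2*a*(1+b^3)*(1-a-b^2)"
      unfolding al_def ga_def bb_def e1f_def e2f_def by algebra
    moreover have "1-a-b^2 > 0" using ad by simp
    ultimately show ?thesis using a0 b3' by (simp add: add_pos_nonneg)
  qed
  have i4: "al + ga - bb > 0"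
  proof -
    have "al + ga - bb = 2*(1-b^3)*(a^2 - (1+b)^2*a + (1+b)*(1+b^2))"
      unfolding al_def ga_def bb_def e1f_def e2f_def by algebra
    moreover have "a^2 - (1+b)^2*a + (1+b)*(1+b^2) > 0"
    proof -
      have "4*(a^2 - (1+b)^2*a + (1+b)*(1+b^2)) = (2*a - (1+b)^2)^2 + (1+b)*(1-b)*(b^2+3)"
        by algebra
      moreover have "(1+b)*(1-b)*(b^2+3) > 0"
      proof -
        have "(1+b)*(1-b) > 0" using b0 b1 by simp
        moreover have "b^2+3 > 0" by (simp add: add_nonneg_pos)
        ultimately show ?thesis by simp
      qed
      ultimately show ?thesis by (smt (verit) zero_le_power2)
    qed
    ultimately show ?thesis using b3 by simp
  qed
  show "\<bar>e2f a b - (-(b^3))*(- e1f a b)\<bar> < 1 - (-(b^3))^2"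
  proof -
    have "e2f a b - (-(b^3))*(- e1f a b) = ga" "1 - (-(b^3))^2 = al"
      unfolding ga_def al_def by algebra+
    thus ?thesis using i1 i2 by auto
  qed
  show "\<bar>(- e1f a b) - (-(b^3))*(e2f a b)\<bar> < (1 - (-(b^3))^2) + (e2f a b - (-(b^3))*(- e1f a b))"
  proof -
    have "e2f a b - (-(b^3))*(- e1f a b) = ga" "1 - (-(b^3))^2 = al" "(- e1f a b) - (-(b^3))*(e2f a b) = bb"
      unfolding ga_def al_def bb_def by algebra+
    thus ?thesis using i3 i4 by auto
  qed
qed




definition gx :: "real \<Rightarrow> real \<Rightarrow> real \<Rightarrow> real \<Rightarrow> real \<Rightarrow> real" where
  "gx a b u v r = (((1-b)^2*(1+b) + 2*a*b)*u - 2*b*(1-a-b^2)* v + b^2*(1+b)*r) / (2*a*(1-a-b^2))"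
definition gy :: "real \<Rightarrow> real \<Rightarrow> real \<Rightarrow> real \<Rightarrow> real \<Rightarrow> real" where
  "gy a b u v r = (a*((1-a-b^2)-a)*u + 2*a*(1-a-b^2)* v - a*b^2*r) / (2*a*(1-a-b^2))"
definition gw :: "real \<Rightarrow> real \<Rightarrow> real \<Rightarrow> real \<Rightarrow> real \<Rightarrow> real" where
  "gw a b u v r = (2*a^2*u + 2*a*(1-a)*r) / (2*a*(1-a-b^2))"

lemma gx_nonneg:
  assumes a0: "0 < a" and b0: "0 \<le> b" and b1: "b < 1" and ad: "a < 1 - b^2" and P: "pE u v r"
  shows "0 \<le> gx a b u v r"
proof -
  define d where "d = 1-a-b^2"
  define c1 where "c1 = (1-b)^2*(1+b) + 2*a*b"
  define c3 where "c3 = b^2*(1+b)"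
  have d0: "d > 0" using ad by (simp add: d_def)
  have u0: "0 \<le> u" and r0: "0 \<le> r" and uv: "v^2 \<le> u*r" using P by (auto simp: pE_def)
  have c10: "c1 \<ge> (1-b)^2*(1+b)" using a0 b0 by (simp add: c1_def)
  have c30: "c3 \<ge> 0" using b0 by (simp add: c3_def)
  have dle: "d \<le> (1-b)*(1+b)" using a0 by (simp add: d_def algebra_simps power2_eq_square)
  have "d^2 \<le> ((1-b)*(1+b))^2" using dle d0 by (intro power_mono) auto
  also have "\<dots> = (1-b)^2*(1+b)*(1+b)" by (simp add: power2_eq_square)
  also have "\<dots> \<le> c1 * (1+b)" using c10 b0 by (intro mult_right_mono) auto
  finally have dc: "d^2 \<le> c1*(1+b)" .
  have cc: "b^2*d^2 \<le> c1*c3"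
  proof -
    have "b^2*d^2 \<le> b^2*(c1*(1+b))" using dc by (intro mult_left_mono) auto
    thus ?thesis by (simp add: c3_def algebra_simps)
  qed
  have c1p: "c1 \<ge> 0" using c10 b1 b0 by (smt (verit) mult_nonneg_nonneg zero_le_power2)
  have S0: "0 \<le> c1*u + c3*r" using c1p c30 u0 r0 by simp
  have "(2*b*d* v)^2 = 4*(b^2*d^2)* v^2" by (simp add: power2_eq_square algebra_simps)
  also have "\<dots> \<le> 4*(c1*c3)*(u*r)"
  proof -
    have "(b^2*d^2)* v^2 \<le> (c1*c3)*(u*r)" by (rule mult_mono[OF cc uv]) (use c1p c30 in auto)
    thus ?thesis by simp
  qed
  also have "\<dots> \<le> (c1*u + c3*r)^2"
  proof -
    have "(c1*u + c3*r)^2 - 4*(c1*c3)*(u*r) = (c1*u - c3*r)^2" by (simp add: power2_eq_square algebra_simps)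
    thus ?thesis by (smt (verit) zero_le_power2)
  qed
  finally have sq: "(2*b*d* v)^2 \<le> (c1*u + c3*r)^2" .
  hence "\<bar>2*b*d* v\<bar> \<le> \<bar>c1*u + c3*r\<bar>" using abs_le_square_iff by blast
  hence "2*b*d* v \<le> c1*u + c3*r" using S0 by linarith
  hence num: "0 \<le> c1*u - 2*b*d* v + c3*r" by simp
  have "gx a b u v r = (c1*u - 2*b*d* v + c3*r) / (2*a*d)" unfolding gx_def c1_def c3_def d_def by simp
  thus ?thesis using num a0 d0 by simp
qed

lemma gD:
  assumes "2*a*(1-a-b^2) \<noteq> 0"
  shows "gx a b u v r * (2*a*(1-a-b^2)) = ((1-b)^2*(1+b) + 2*a*b)*u - 2*b*(1-a-b^2)* v + b^2*(1+b)*r"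
    "gy a b u v r * (2*a*(1-a-b^2)) = a*((1-a-b^2)-a)*u + 2*a*(1-a-b^2)* v - a*b^2*r"
    "gw a b u v r * (2*a*(1-a-b^2)) = 2*a^2*u + 2*a*(1-a)*r"
  using assms by (simp_all add: gx_def gy_def gw_def)





lemma G1x:
  fixes a b u v r D P1 P2 P3 :: real
  assumes eD: "D = 2*a*(1-a-b^2)" and e1: "P1 = 1-b^2" and e2: "P2 = 1+b" and e3: "P3 = (1-b)*a*(2+2*b-a)"
    and nz: "D \<noteq> 0" "P1 \<noteq> 0" "P2 \<noteq> 0" "P3 \<noteq> 0"
  shows "((((1-b)^2*(1+b) + 2*a*b)*u - 2*b*(1-a-b^2)* v + b^2*(1+b)*r)/D) = (1/P1)*(u+a^2*((((1-b)^2*(1+b) + 2*a*b)*u - 2*b*(1-a-b^2)* v + b^2*(1+b)*r)/D)) + (P2/P3)*((1-a-((1-a+b)*b/P2))^2*(u+a^2*((((1-b)^2*(1+b) + 2*a*b)*u - 2*b*(1-a-b^2)* v + b^2*(1+b)*r)/D)) + 2*(1-a-((1-a+b)*b/P2))*(-b)*(v-a^2*((((1-b)^2*(1+b) + 2*a*b)*u - 2*b*(1-a-b^2)* v + b^2*(1+b)*r)/D)) + (-b)^2*(r+a^2*((((1-b)^2*(1+b) + 2*a*b)*u - 2*b*(1-a-b^2)* v + b^2*(1+b)*r)/D)))"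
  using nz apply (simp add: field_simps)
  unfolding eD e1 e2 e3 by algebra

lemma G2x:
  fixes a b u v r D P1 P2 P3 :: real
  assumes eD: "D = 2*a*(1-a-b^2)" and e1: "P1 = 1-b^2" and e2: "P2 = 1+b" and e3: "P3 = (1-b)*a*(2+2*b-a)"
    and nz: "D \<noteq> 0" "P1 \<noteq> 0" "P2 \<noteq> 0" "P3 \<noteq> 0"
  shows "((a*((1-a-b^2)-a)*u + 2*a*(1-a-b^2)* v - a*b^2*r)/D) = (1/P1)*(v-a^2*((((1-b)^2*(1+b) + 2*a*b)*u - 2*b*(1-a-b^2)* v + b^2*(1+b)*r)/D)) + (P2/P3)*((1-a-((1-a+b)*b/P2))*a*(u+a^2*((((1-b)^2*(1+b) + 2*a*b)*u - 2*b*(1-a-b^2)* v + b^2*(1+b)*r)/D)) + ((1-a-((1-a+b)*b/P2))*(b-((1-a+b)*b/P2))+(-b)*a)*(v-a^2*((((1-b)^2*(1+b) + 2*a*b)*u - 2*b*(1-a-b^2)* v + b^2*(1+b)*r)/D)) + (-b)*(b-((1-a+b)*b/P2))*(r+a^2*((((1-b)^2*(1+b) + 2*a*b)*u - 2*b*(1-a-b^2)* v + b^2*(1+b)*r)/D)))"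
  using nz apply (simp add: field_simps)
  unfolding eD e1 e2 e3 by algebra

lemma G3x:
  fixes a b u v r D P1 P2 P3 :: real
  assumes eD: "D = 2*a*(1-a-b^2)" and e1: "P1 = 1-b^2" and e2: "P2 = 1+b" and e3: "P3 = (1-b)*a*(2+2*b-a)"
    and nz: "D \<noteq> 0" "P1 \<noteq> 0" "P2 \<noteq> 0" "P3 \<noteq> 0"
  shows "((2*a^2*u + 2*a*(1-a)*r)/D) = (1/P1)*(r+a^2*((((1-b)^2*(1+b) + 2*a*b)*u - 2*b*(1-a-b^2)* v + b^2*(1+b)*r)/D)) + (P2/P3)*(a^2*(u+a^2*((((1-b)^2*(1+b) + 2*a*b)*u - 2*b*(1-a-b^2)* v + b^2*(1+b)*r)/D)) + 2*a*(b-((1-a+b)*b/P2))*(v-a^2*((((1-b)^2*(1+b) + 2*a*b)*u - 2*b*(1-a-b^2)* v + b^2*(1+b)*r)/D)) + (b-((1-a+b)*b/P2))^2*(r+a^2*((((1-b)^2*(1+b) + 2*a*b)*u - 2*b*(1-a-b^2)* v + b^2*(1+b)*r)/D)))"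
  using nz apply (simp add: field_simps)
  unfolding eD e1 e2 e3 by algebra



lemma GR:
  fixes a b u v r X Y W iD :: real
  assumes "iD * (2*a*(1-a-b^2)) = 1" "X * (2*a*(1-a-b^2)) = ((1-b)^2*(1+b) + 2*a*b)*u - 2*b*(1-a-b^2)* v + b^2*(1+b)*r"
   "Y * (2*a*(1-a-b^2)) = a*((1-a-b^2)-a)*u + 2*a*(1-a-b^2)* v - a*b^2*r"
   "W * (2*a*(1-a-b^2)) = 2*a^2*u + 2*a*(1-a)*r"
  shows "X - (((1-a)^2 + a^2)*X - 2*(1-a)*b*Y + b^2*W) = u"
    "Y - (a*(1-2*a)*X + b*(1-2*a)*Y - b^2*W) = v"
    "W - (2*a^2*X + 2*a*b*Y + b^2*W) = r"
  using assms by algebra+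

lemma GL:
  fixes a b x y w X Y W iD :: real
  defines "u \<equiv> x - (((1-a)^2 + a^2)*x - 2*(1-a)*b*y + b^2*w)"
    and "v \<equiv> y - (a*(1-2*a)*x + b*(1-2*a)*y - b^2*w)"
    and "r \<equiv> w - (2*a^2*x + 2*a*b*y + b^2*w)"
  assumes "iD * (2*a*(1-a-b^2)) = 1" "X * (2*a*(1-a-b^2)) = ((1-b)^2*(1+b) + 2*a*b)*u - 2*b*(1-a-b^2)* v + b^2*(1+b)*r"
   "Y * (2*a*(1-a-b^2)) = a*((1-a-b^2)-a)*u + 2*a*(1-a-b^2)* v - a*b^2*r"
   "W * (2*a*(1-a-b^2)) = 2*a^2*u + 2*a*(1-a)*r"
  shows "X = x" "Y = y" "W = w"
  using assms unfolding u_def v_def r_def by algebra+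



lemma G_psd:
  fixes a b u v r :: real
  assumes a0: "0 < a" and b0: "0 \<le> b" and b1: "b < 1" and ad: "a < 1 - b^2" and P: "pE u v r"
  shows "pE (gx a b u v r) (gy a b u v r) (gw a b u v r)"
proof -
  have nz: "2*a*(1-a-b^2) \<noteq> 0" "1-b^2 \<noteq> 0" "1+b \<noteq> 0" "(1-b)*a*(2+2*b-a) \<noteq> 0"
    using a0 b0 b1 ad by (auto, smt (verit) zero_le_power2)
  define x0 where "x0 = gx a b u v r"
  note R1 = G1x[OF refl refl refl refl nz, where u=u and v=v and r=r, folded gx_def, folded x0_def]
  note R2 = G2x[OF refl refl refl refl nz, where u=u and v=v and r=r, folded gx_def gy_def, folded x0_def]
  note R3 = G3x[OF refl refl refl refl nz, where u=u and v=v and r=r, folded gx_def, folded x0_def]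
  have x0p: "0 \<le> x0" using gx_nonneg[OF a0 b0 b1 ad P] by (simp add: x0_def)
  have PQ: "pE (a^2*x0) (-(a^2*x0)) (a^2*x0)" using x0p by (simp add: pE_def power2_eq_square)
  have PV: "pE (u + a^2*x0) (v - a^2*x0) (r + a^2*x0)" using pE_add[OF P PQ] by simp
  have k0: "0 \<le> 1/(1-b^2)" using b0 b1 ad a0 by simp
  have z0: "0 \<le> (1+b)/((1-b)*a*(2+2*b-a))" using b0 b1 ad a0
    by (intro divide_nonneg_pos mult_pos_pos) (auto, smt (verit) zero_le_power2)
  show ?thesis unfolding x0_def[symmetric] gw_def
    apply (subst R1) apply (subst R2) apply (subst R3)
    by (rule pE_add[OF pE_scale[OF PV k0] pE_scale[OF pE_cong[OF PV] z0]])
qed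

theorem lemmaA3:
  fixes \<eta> lam \<beta> :: real
  assumes "\<eta> > 0" and "0 \<le> \<beta>" and "\<beta> < 1" and "\<eta> * lam > 0"
  shows "(Mop_specrad \<eta> lam \<beta> < 1 \<longleftrightarrow> \<eta> * lam < 1 - \<beta>^2)
    \<and> (\<eta> * lam < 1 - \<beta>^2 \<longrightarrow>
         bij_betw (\<lambda>X. X - Mop \<eta> lam \<beta> X) S2 S2
       \<and> inv_into S2 (\<lambda>X. X - Mop \<eta> lam \<beta> X) ` S2_plus \<subseteq> S2_plus)
    \<and> (\<eta> * lam < 1 - \<beta>^2 \<longrightarrow>
         (let Y = inv_into S2 (\<lambda>X. X - Mop \<eta> lam \<beta> X) Qmat in
            Y \<in> S2_plus \<and>
            Y$1$1 = (1 + \<beta>) / (2 * \<eta> * lam * (1 - \<beta>^2 - \<eta> * lam))))"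
proof -
  define a where "a = \<eta> * lam"
  have a0: "0 < a" using assms(4) a_def by simp
  have b0: "0 \<le> \<beta>" and b1: "\<beta> < 1" using assms by auto
  define E where "E = {z. Mop_eigenvalue \<eta> lam \<beta> z}"
  define pp where "pp = [:complex_of_real (-(\<beta>^3)), of_real (e2f a \<beta>), of_real (- e1f a \<beta>), 1:]"
  have Epoly: "z \<in> E \<longleftrightarrow> poly pp z = 0" for z
    unfolding E_def pp_def a_def mem_Collect_eq eig_iff_root pc_poly ..
  have pp0: "pp \<noteq> 0" unfolding pp_def by simp
  have finE: "finite E" using poly_roots_finite[OF pp0] Epoly by (metis (mono_tags) finite_subset mem_Collect_eq subsetI)
  define fr where "fr t = t^3 - e1f a \<beta> * t^2 + e2f a \<beta> * t - \<beta>^3" for t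
  have rr: "complex_of_real t \<in> E" if "fr t = 0" for t
  proof -
    have "pc (complex_of_real \<eta> * complex_of_real lam) (complex_of_real \<beta>) (of_real t) = 0"
      unfolding pc_realpt using that by (simp add: fr_def a_def)
    thus ?thesis by (simp add: E_def eig_iff_root)
  qed
  have cont: "continuous_on S fr" for S unfolding fr_def by (intro continuous_intros)
  have fr1: "fr 1 = 2*a*(1-a-\<beta>^2)" unfolding fr_def e1f_def e2f_def
    by (simp add: power2_eq_square power3_eq_cube algebra_simps)
  have fr0: "fr 0 = -(\<beta>^3)" by (simp add: fr_def)
  have specrad: "Mop_specrad \<eta> lam \<beta> = Sup (cmod ` E)" by (simp add: Mop_specrad_def E_def)
  have partA: "Mop_specrad \<eta> lam \<beta> < 1 \<longleftrightarrow> a < 1 - \<beta>^2"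
  proof (cases "a < 1 - \<beta>^2")
    case True
    have all: "\<forall>x\<in>cmod ` E. x < 1"
    proof
      fix x assume "x \<in> cmod ` E"
      then obtain z where zE: "z \<in> E" and xz: "x = cmod z" by blast
      hence "pc (of_real \<eta> * of_real lam) (of_real \<beta>) z = 0" by (simp add: E_def eig_iff_root)
      hence "z^3 + of_real (- e1f a \<beta>) * z^2 + of_real (e2f a \<beta>) * z + of_real (-(\<beta>^3)) = 0"
        unfolding pc_real a_def .
      thus "x < 1" unfolding xz by (rule schur3[OF ineqs(1)[OF a0 b0 b1 True] ineqs(2)[OF a0 b0 b1 True]])
    qed
    have "fr 0 \<le> 0" using fr0 b0 by simp
    moreover have "0 \<le> fr 1" using fr1 a0 True by simp
    ultimately obtain t where "fr t = 0" using IVT'[of fr 0 0 1] cont by auto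
    hence nE: "cmod ` E \<noteq> {}" using rr by blast
    have "Sup (cmod ` E) = Max (cmod ` E)" using finE nE by (simp add: cSup_eq_Max)
    also have "\<dots> < 1" using finE nE all by (simp add: Max_less_iff)
    finally show ?thesis using True specrad by simp
  next
    case False
    have "1-a-\<beta>^2 \<le> 0" using False by simp
    hence fr1n: "fr 1 \<le> 0" unfolding fr1 using a0 by (intro mult_nonneg_nonpos) auto
    define R where "R = 2 + \<bar>e1f a \<beta>\<bar> + \<bar>e2f a \<beta>\<bar>"
    have R1: "1 \<le> R" unfolding R_def by simp
    have frR: "0 \<le> fr R"
    proof -
      have p: "e1f a \<beta> * R^2 \<le> \<bar>e1f a \<beta>\<bar> * R^2" by (intro mult_right_mono) auto
      have q: "- (e2f a \<beta> * R) \<le> \<bar>e2f a \<beta>\<bar> * R"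
        using mult_right_mono[of "- e2f a \<beta>" "\<bar>e2f a \<beta>\<bar>" R] R1 by simp
      have b3: "\<beta>^3 \<le> 1" using b0 b1 by (simp add: power_le_one)
      have RR: "R \<le> R^2" using R1 by (simp add: power2_eq_square)
      have q2: "\<bar>e2f a \<beta>\<bar> * R \<le> \<bar>e2f a \<beta>\<bar> * R^2" using RR by (intro mult_left_mono) auto
      have R3: "R^3 = 2*R^2 + \<bar>e1f a \<beta>\<bar> * R^2 + \<bar>e2f a \<beta>\<bar> * R^2"
        unfolding R_def by (simp add: power2_eq_square power3_eq_cube algebra_simps)
      have R2: "1 \<le> R^2" using R1 RR by simp
      show ?thesis unfolding fr_def using p q b3 q2 R3 R2 by linarith
    qed
    obtain t where t1: "1 \<le> t" and ft: "fr t = 0" using IVT'[of fr 1 0 R] fr1n frR R1 cont by auto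
    have tE: "cmod (complex_of_real t) \<in> cmod ` E" using rr[OF ft] by blast
    have "1 \<le> cmod (complex_of_real t)" using t1 by simp
    also have "\<dots> \<le> Sup (cmod ` E)"
      by (rule cSup_upper[OF tE bdd_above_finite[OF finite_imageI[OF finE]]])
    finally show ?thesis using False specrad by simp
  qed
  define G where "G U = mat2 (gx a \<beta> (U$1$1) (U$1$2) (U$2$2)) (gy a \<beta> (U$1$1) (U$1$2) (U$2$2))
      (gy a \<beta> (U$1$1) (U$1$2) (U$2$2)) (gw a \<beta> (U$1$1) (U$1$2) (U$2$2))" for U :: "real^2^2"
  have Ge: "G U $1$1 = gx a \<beta> (U$1$1) (U$1$2) (U$2$2)" "G U $1$2 = gy a \<beta> (U$1$1) (U$1$2) (U$2$2)"
    "G U $2$1 = gy a \<beta> (U$1$1) (U$1$2) (U$2$2)" "G U $2$2 = gw a \<beta> (U$1$1) (U$1$2) (U$2$2)" for U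
    by (simp_all add: G_def mat2_def)
  have GS: "G U \<in> S2" for U by (simp add: S2_iff Ge)
  have fS: "X - Mop \<eta> lam \<beta> X \<in> S2" if "X \<in> S2" for X
  proof -
    have s: "X$2$1 = X$1$2" using that S2_iff by blast
    show ?thesis using Mop_sym[OF s, of \<eta> lam \<beta>] s by (simp add: S2_iff)
  qed
  have partB: "bij_betw (\<lambda>X. X - Mop \<eta> lam \<beta> X) S2 S2
       \<and> inv_into S2 (\<lambda>X. X - Mop \<eta> lam \<beta> X) ` S2_plus \<subseteq> S2_plus
       \<and> inv_into S2 (\<lambda>X. X - Mop \<eta> lam \<beta> X) Qmat = G Qmat" if ad: "a < 1 - \<beta>^2"
  proof -
    have Dn: "2*a*(1-a-\<beta>^2) \<noteq> 0" using a0 ad by simp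
    have iD: "(1/(2*a*(1-a-\<beta>^2))) * (2*a*(1-a-\<beta>^2)) = 1" using Dn by simp
    have fG: "G U - Mop \<eta> lam \<beta> (G U) = U" if "U \<in> S2" for U
    proof -
      have s: "U$2$1 = U$1$2" using that S2_iff by blast
      have sG: "G U $2$1 = G U $1$2" using Ge by simp
      note M = Mop_sym[OF sG, of \<eta> lam \<beta>, folded a_def]
      note r = GR[OF iD gD[OF Dn, of "U$1$1" "U$1$2" "U$2$2"]]
      show ?thesis unfolding vec_eq_iff forall_2 vector_minus_component M Ge
        using r s by simp
    qed
    have Gf: "G (X - Mop \<eta> lam \<beta> X) = X" if "X \<in> S2" for X
    proof -
      have s: "X$2$1 = X$1$2" using that S2_iff by blast
      note M = Mop_sym[OF s, of \<eta> lam \<beta>, folded a_def]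
      note g = gD[OF Dn, of "(X - Mop \<eta> lam \<beta> X)$1$1" "(X - Mop \<eta> lam \<beta> X)$1$2" "(X - Mop \<eta> lam \<beta> X)$2$2",
        unfolded vector_minus_component M]
      note l = GL[OF iD g]
      show ?thesis unfolding vec_eq_iff forall_2 Ge vector_minus_component M
        using l s by simp
    qed
    have bij: "bij_betw (\<lambda>X. X - Mop \<eta> lam \<beta> X) S2 S2"
      by (rule bij_betw_byWitness[where f'=G]) (use Gf fG fS GS in auto)
    have inj: "inj_on (\<lambda>X. X - Mop \<eta> lam \<beta> X) S2" using bij bij_betw_imp_inj_on by blast
    have invG: "inv_into S2 (\<lambda>X. X - Mop \<eta> lam \<beta> X) U = G U" if "U \<in> S2" for U
      by (rule inv_into_f_eq[OF inj GS fG[OF that]])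
    have Gpsd: "G U \<in> S2_plus" if "U \<in> S2_plus" for U
    proof -
      have "U$2$1 = U$1$2" "pE (U$1$1) (U$1$2) (U$2$2)" using that by (auto simp: psd2_iff S2_plus_def)
      hence "pE (gx a \<beta> (U$1$1) (U$1$2) (U$2$2)) (gy a \<beta> (U$1$1) (U$1$2) (U$2$2)) (gw a \<beta> (U$1$1) (U$1$2) (U$2$2))"
        using G_psd[OF a0 b0 b1 ad] by blast
      thus ?thesis unfolding S2_plus_def psd2_iff by (simp add: Ge)
    qed
    have img: "inv_into S2 (\<lambda>X. X - Mop \<eta> lam \<beta> X) ` S2_plus \<subseteq> S2_plus"
    proof
      fix Y assume "Y \<in> inv_into S2 (\<lambda>X. X - Mop \<eta> lam \<beta> X) ` S2_plus"
      then obtain U where U: "U \<in> S2_plus" and Y: "Y = inv_into S2 (\<lambda>X. X - Mop \<eta> lam \<beta> X) U" by blast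
      have "U \<in> S2" using U by (simp add: S2_plus_def psd2_iff S2_iff)
      thus "Y \<in> S2_plus" using Y invG Gpsd U by simp
    qed
    have "Qmat \<in> S2" by (simp add: S2_iff Qmat_def mat2_def)
    thus ?thesis using bij img invG[of Qmat] by simp
  qed
  have Qe: "(Qmat::real^2^2)$1$1 = 1" "(Qmat::real^2^2)$1$2 = -1" "(Qmat::real^2^2)$2$1 = -1" "(Qmat::real^2^2)$2$2 = 1"
    by (simp_all add: Qmat_def mat2_def)
  have Qpsd: "(Qmat::real^2^2) \<in> S2_plus" by (simp add: S2_plus_def psd2_iff Qe pE_def)
  have partC: "(let Y = inv_into S2 (\<lambda>X. X - Mop \<eta> lam \<beta> X) Qmat in
            Y \<in> S2_plus \<and> Y$1$1 = (1 + \<beta>) / (2 * \<eta> * lam * (1 - \<beta>^2 - \<eta> * lam)))"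
    if ad: "a < 1 - \<beta>^2"
  proof -
    have inv: "inv_into S2 (\<lambda>X. X - Mop \<eta> lam \<beta> X) Qmat = G Qmat" using partB[OF ad] by blast
    have "inv_into S2 (\<lambda>X. X - Mop \<eta> lam \<beta> X) Qmat \<in> S2_plus" using partB[OF ad] Qpsd by blast
    hence "G Qmat \<in> S2_plus" using inv by simp
    moreover have "G Qmat $1$1 = (1 + \<beta>) / (2 * \<eta> * lam * (1 - \<beta>^2 - \<eta> * lam))"
    proof -
      have num: "((1-\<beta>)^2*(1+\<beta>) + 2*a*\<beta>)*1 - 2*\<beta>*(1-a-\<beta>^2)* (-1) + \<beta>^2*(1+\<beta>)*1 = 1+\<beta>"
        by algebra
      have den: "2*a*(1-a-\<beta>^2) = 2 * \<eta> * lam * (1 - \<beta>^2 - \<eta> * lam)" by (simp add: a_def algebra_simps)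
      show ?thesis by (simp only: Ge Qe gx_def num den)
    qed
    ultimately show ?thesis using inv by (simp add: Let_def)
  qed
  show ?thesis using partA partB partC unfolding a_def by blast
qed

end
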